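(* Assume that at each bus either there is no generator or there are at least two generators, i.e., $n_i=0$ or $n_i\ge 2$ for every $i\in\{1,\dots,N_b\}$. Then the inelastic electricity market game has an efficient Nash equilibrium.
   Context: Network: a directed graph $\mathcal G=(\mathcal V,\mathcal E)$ with buses $\mathcal V=\{1,\dots,N_b\}$ and power lines $\mathcal E$; $\mathcal N_i^+=\{j:(i,j)\in\mathcal E\}$, $\mathcal N_i^-=\{j:(j,i)\in\mathcal E\}$. Each line $(i,j)$ carries flow $z_{ij}\in\mathbb R$ with limit $\bar z_{ij}>0$. There are $N$ generators labelled $1,\dots,N$; $G_i$ is the (possibly empty) set of generators at bus $i$, the $G_i$ partition $\{1,\dots,N\}$, and $n_i=|G_i|$. Bus $i$ has load $y_i\ge0$. Generator $n$ has cost $f_n(x)=a_nx^2+c_nx$ with $a_n>0$, $c_n\ge 0$. DC-OPF: minimize $\sum_{n=1}^N f_n(x_n)$ over $(x,z)$ subject to $\sum_{j\in\mathcal N_i^+}z_{ij}-\sum_{j\in\mathcal N_i^-}z_{ji}=\sum_{n\in G_i}x_n-y_i$ for all buses $i$ (the sum over $G_i$ being $0$ if $G_i=\emptyset$), $-\bar z_{ij}\le z_{ij}\le\bar z_{ij}$ for all $(i,j)\in\mathcal E$, and $x\ge 0$. This problem is assumed feasible; $(x^*,z^* )$ denotes an optimizer, and $x^*$ is unique. S-DC-OPF given bids $b\in\mathbb R^N_{\ge0}$: same constraints, objective $\sum_{n=1}^N b_nx_n$. Inelastic electricity market game: players are generators $n$, actions are bids $b_n\ge 0$, and given bids $b$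 and an optimizer $(x^{\rm opt}(b),z^{\rm opt}(b))$ of S-DC-OPF chosen by the operator, player $n$'s payoff is $u_n(b_n,x^{\rm opt}_n(b))=b_nx^{\rm opt}_n(b)-f_n(x^{\rm opt}_n(b))$. Nash equilibrium: a bid profile $b^*\ge0$ for which there exists an optimizer $(x^{\rm opt}(b^* ),z^{\rm opt}(b^* ))$ of S-DC-OPF with bids $b^*$ such that for all $n$, all $b_n\ge0$, and all optimizers $x^{\rm opt}(b_n,b^*_{-n})$ of S-DC-OPF with bids $(b_n,b^*_{-n})$, $u_n(b_n,x^{\rm opt}_n(b_n,b^*_{-n}))\le u_n(b_n^*,x^{\rm opt}_n(b^* ))$. Efficient bid: $b^*\ge0$ such that $(x^*,z^* )$ is an optimizer of S-DC-OPF with bids $b^*$ and $x^*_n=\arg\max_{x\ge0}(b^*_nx-f_n(x))$ for all $n$. An efficient Nash equilibrium is an efficient bid that is a Nash equilibrium. *)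

theory Defs
  imports Complex_Main
begin

text \<open>Buses: finite type 'v. Generators: finite type 'g. The location map
  loc :: 'g => 'v assigns each generator its bus, so G_i = {n. loc n = i}
  (these sets partition the generators). Lines: E :: ('v * 'v) set.
  Flows z :: 'v * 'v => real (required to vanish off E), dispatch x :: 'g => real.\<close>

definition gens_at :: "('g \<Rightarrow> 'v) \<Rightarrow> 'v \<Rightarrow> 'g set" where
  "gens_at loc i = {n. loc n = i}"

definition feasible ::
  "('v::finite \<times> 'v) set \<Rightarrow> ('v \<times> 'v \<Rightarrow> real) \<Rightarrow> ('g::finite \<Rightarrow> 'v) \<Rightarrow> ('v \<Rightarrow> real)
   \<Rightarrow> ('g \<Rightarrow> real) \<Rightarrow> ('v \<times> 'v \<Rightarrow> real) \<Rightarrow> bool" where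
  "feasible E zbar loc y x z \<longleftrightarrow>
     (\<forall>i. (\<Sum>j\<in>{j. (i, j) \<in> E}. z (i, j)) - (\<Sum>j\<in>{j. (j, i) \<in> E}. z (j, i))
           = (\<Sum>n\<in>gens_at loc i. x n) - y i)
   \<and> (\<forall>e\<in>E. - zbar e \<le> z e \<and> z e \<le> zbar e)
   \<and> (\<forall>e. e \<notin> E \<longrightarrow> z e = 0)
   \<and> (\<forall>n. 0 \<le> x n)"

definition gen_cost :: "('g \<Rightarrow> real) \<Rightarrow> ('g \<Rightarrow> real) \<Rightarrow> 'g \<Rightarrow> real \<Rightarrow> real" where
  "gen_cost a c n t = a n * t\<^sup>2 + c n * t"

definition is_opt_DCOPF ::
  "('v::finite \<times> 'v) set \<Rightarrow> ('v \<times> 'v \<Rightarrow> real) \<Rightarrow> ('g::finite \<Rightarrow> 'v) \<Rightarrow> ('v \<Rightarrow> real)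
   \<Rightarrow> ('g \<Rightarrow> real) \<Rightarrow> ('g \<Rightarrow> real)
   \<Rightarrow> ('g \<Rightarrow> real) \<Rightarrow> ('v \<times> 'v \<Rightarrow> real) \<Rightarrow> bool" where
  "is_opt_DCOPF E zbar loc y a c x z \<longleftrightarrow>
     feasible E zbar loc y x z \<and>
     (\<forall>x' z'. feasible E zbar loc y x' z' \<longrightarrow>
        (\<Sum>n\<in>UNIV. gen_cost a c n (x n)) \<le> (\<Sum>n\<in>UNIV. gen_cost a c n (x' n)))"

definition is_opt_SDCOPF ::
  "('v::finite \<times> 'v) set \<Rightarrow> ('v \<times> 'v \<Rightarrow> real) \<Rightarrow> ('g::finite \<Rightarrow> 'v) \<Rightarrow> ('v \<Rightarrow> real)
   \<Rightarrow> ('g \<Rightarrow> real)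
   \<Rightarrow> ('g \<Rightarrow> real) \<Rightarrow> ('v \<times> 'v \<Rightarrow> real) \<Rightarrow> bool" where
  "is_opt_SDCOPF E zbar loc y b x z \<longleftrightarrow>
     feasible E zbar loc y x z \<and>
     (\<forall>x' z'. feasible E zbar loc y x' z' \<longrightarrow>
        (\<Sum>n\<in>UNIV. b n * x n) \<le> (\<Sum>n\<in>UNIV. b n * x' n))"

definition payoff :: "('g \<Rightarrow> real) \<Rightarrow> ('g \<Rightarrow> real) \<Rightarrow> 'g \<Rightarrow> real \<Rightarrow> real \<Rightarrow> real" where
  "payoff a c n bn t = bn * t - gen_cost a c n t"

definition is_Nash ::
  "('v::finite \<times> 'v) set \<Rightarrow> ('v \<times> 'v \<Rightarrow> real) \<Rightarrow> ('g::finite \<Rightarrow> 'v) \<Rightarrow> ('v \<Rightarrow> real)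
   \<Rightarrow> ('g \<Rightarrow> real) \<Rightarrow> ('g \<Rightarrow> real) \<Rightarrow> ('g \<Rightarrow> real) \<Rightarrow> bool" where
  "is_Nash E zbar loc y a c b \<longleftrightarrow>
     (\<forall>n. 0 \<le> b n) \<and>
     (\<exists>x z. is_opt_SDCOPF E zbar loc y b x z \<and>
        (\<forall>n bn. 0 \<le> bn \<longrightarrow>
           (\<forall>x' z'. is_opt_SDCOPF E zbar loc y (b(n := bn)) x' z' \<longrightarrow>
              payoff a c n bn (x' n) \<le> payoff a c n (b n) (x n))))"

definition is_efficient_bid ::
  "('v::finite \<times> 'v) set \<Rightarrow> ('v \<times> 'v \<Rightarrow> real) \<Rightarrow> ('g::finite \<Rightarrow> 'v) \<Rightarrow> ('v \<Rightarrow> real)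
   \<Rightarrow> ('g \<Rightarrow> real) \<Rightarrow> ('g \<Rightarrow> real) \<Rightarrow> ('g \<Rightarrow> real) \<Rightarrow> ('v \<times> 'v \<Rightarrow> real)
   \<Rightarrow> ('g \<Rightarrow> real) \<Rightarrow> bool" where
  "is_efficient_bid E zbar loc y a c xs zs b \<longleftrightarrow>
     (\<forall>n. 0 \<le> b n) \<and>
     is_opt_SDCOPF E zbar loc y b xs zs \<and>
     (\<forall>n. is_arg_max (\<lambda>t. b n * t - gen_cost a c n t) (\<lambda>t. 0 \<le> t) (xs n))"

end

theory Submission imports Defs begin

lemma feasible_regroup:
  assumes "feasible E zbar loc y x z" "\<forall>n. 0 \<le> x' n"
    "\<forall>i. sum x' (gens_at loc i) = sum x (gens_at loc i)"
  shows "feasible E zbar loc y x' z"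
  using assms unfolding feasible_def by metis

lemma lin_aux:
  fixes A B X A' B' X' y t :: real
  assumes "A - B = X - y" "A' - B' = X' - y"
  shows "(A + t*(A'-A)) - (B + t*(B'-B)) = (X + t*(X'-X)) - y"
proof -
  have "(A + t*(A'-A)) - (B + t*(B'-B)) = (A-B) + t*((A'-B') - (A-B))" by (simp add: algebra_simps)
  also have "\<dots> = (X - y) + t*((X' - y) - (X - y))" using assms by simp
  finally show ?thesis by (simp add: algebra_simps)
qed

lemma feasible_convex:
  assumes f1: "feasible E zbar loc y x z" and f2: "feasible E zbar loc y x' z'"
    and t: "0 \<le> t" "t \<le> 1"
  shows "feasible E zbar loc y (\<lambda>n. x n + t * (x' n - x n)) (\<lambda>e. z e + t * (z' e - z e))"
proof -
  have sumlin: "\<And>S (f::_\<Rightarrow>real) g. (\<Sum>k\<in>S. f k + t * (g k - f k)) = sum f S + t * (sum g S - sum f S)"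
    by (simp add: sum.distrib sum_distrib_left[symmetric] sum_subtractf)
  show ?thesis unfolding feasible_def
  proof (intro conjI allI ballI impI)
    fix i
    have "(\<Sum>j\<in>{j. (i, j) \<in> E}. z (i, j)) - (\<Sum>j\<in>{j. (j, i) \<in> E}. z (j, i))
           = (\<Sum>n\<in>gens_at loc i. x n) - y i"
         "(\<Sum>j\<in>{j. (i, j) \<in> E}. z' (i, j)) - (\<Sum>j\<in>{j. (j, i) \<in> E}. z' (j, i))
           = (\<Sum>n\<in>gens_at loc i. x' n) - y i" using f1 f2 unfolding feasible_def by auto
    then show "(\<Sum>j\<in>{j. (i, j) \<in> E}. z (i, j) + t * (z' (i, j) - z (i, j))) -
         (\<Sum>j\<in>{j. (j, i) \<in> E}. z (j, i) + t * (z' (j, i) - z (j, i))) =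
         (\<Sum>n\<in>gens_at loc i. x n + t * (x' n - x n)) - y i"
      unfolding sumlin by (rule lin_aux)
  next
    fix e assume e: "e \<in> E"
    have b: "- zbar e \<le> z e" "z e \<le> zbar e" "- zbar e \<le> z' e" "z' e \<le> zbar e"
      using f1 f2 e unfolding feasible_def by auto
    have "z e + t * (z' e - z e) = (1 - t) * z e + t * z' e" by (simp add: algebra_simps)
    moreover have "(1-t) * (- zbar e) \<le> (1-t) * z e" "t * (- zbar e) \<le> t * z' e"
      "(1-t) * z e \<le> (1-t) * zbar e" "t * z' e \<le> t * zbar e"
      using b t by (intro mult_left_mono; simp)+
    ultimately show "- zbar e \<le> z e + t * (z' e - z e)" "z e + t * (z' e - z e) \<le> zbar e"
      by (auto simp: algebra_simps)
  next
    fix e assume "e \<notin> E"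
    then have "z e = 0" "z' e = 0" using f1 f2 unfolding feasible_def by blast+
    then show "z e + t * (z' e - z e) = 0" by simp
  next
    fix n
    have "0 \<le> x n" "0 \<le> x' n" using f1 f2 unfolding feasible_def by auto
    have "x n + t * (x' n - x n) = (1 - t) * x n + t * x' n" by (simp add: algebra_simps)
    then show "0 \<le> x n + t * (x' n - x n)" using \<open>0 \<le> x n\<close> \<open>0 \<le> x' n\<close> t by simp
  qed
qed

lemma shift_sum:
  fixes x :: "'g::finite \<Rightarrow> real"
  assumes "finite S"
  shows "(\<Sum>k\<in>S. f k * (x k + (if k = m then d else 0) - (if k = n then d else 0)))
        = (\<Sum>k\<in>S. f k * x k) + (if m \<in> S then f m * d else 0) - (if n \<in> S then f n * d else 0)"
proof -
  have "(\<Sum>k\<in>S. f k * (x k + (if k = m then d else 0) - (if k = n then d else 0)))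
    = (\<Sum>k\<in>S. f k * x k) + (\<Sum>k\<in>S. if k = m then f k * d else 0) - (\<Sum>k\<in>S. if k = n then f k * d else 0)"
  proof -
    have "\<And>k. f k * (x k + (if k = m then d else 0) - (if k = n then d else 0))
       = f k * x k + (if k = m then f k * d else 0) - (if k = n then f k * d else 0)"
      by (simp add: algebra_simps)
    then show ?thesis by (simp add: sum.distrib sum_subtractf)
  qed
  then show ?thesis using assms by (simp add: sum.delta)
qed

lemma deriv_opt:
  fixes xs :: "'g::finite \<Rightarrow> real"
  assumes opt: "is_opt_DCOPF E zbar loc y a c xs zs"
    and a_pos: "\<forall>n. 0 < a n"
    and f2: "feasible E zbar loc y x' z'"
  shows "(\<Sum>n\<in>UNIV. (2 * a n * xs n + c n) * xs n) \<le> (\<Sum>n\<in>UNIV. (2 * a n * xs n + c n) * x' n)"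
proof (rule ccontr)
  define d where "d n = x' n - xs n" for n
  define S where "S = (\<Sum>n\<in>UNIV. (2 * a n * xs n + c n) * d n)"
  define Q where "Q = (\<Sum>n\<in>UNIV. a n * (d n)^2)"
  assume "\<not> ?thesis"
  then have Sneg: "S < 0" unfolding S_def d_def by (simp add: algebra_simps sum_subtractf)
  have Q0: "0 \<le> Q" unfolding Q_def using a_pos by (intro sum_nonneg) (simp add: less_imp_le)
  define t where "t = - S / (Q - S)"
  have t0: "0 \<le> t" "t \<le> 1" unfolding t_def using Sneg Q0 by (auto simp: field_simps)
  have f1: "feasible E zbar loc y xs zs" using opt unfolding is_opt_DCOPF_def by auto
  note feasible_convex[OF f1 f2 t0]
  then have "(\<Sum>n\<in>UNIV. gen_cost a c n (xs n)) \<le> (\<Sum>n\<in>UNIV. gen_cost a c n (xs n + t * d n))"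
    using opt unfolding is_opt_DCOPF_def d_def by blast
  moreover have "\<And>n. gen_cost a c n (xs n + t * d n) = gen_cost a c n (xs n) + t * ((2 * a n * xs n + c n) * d n) + t^2 * (a n * (d n)^2)"
    unfolding gen_cost_def by (simp add: algebra_simps power2_eq_square)
  ultimately have "0 \<le> t * S + t^2 * Q"
    unfolding S_def Q_def by (simp add: sum.distrib sum_distrib_left)
  moreover have "t * S + t^2 * Q = t * (S + t * Q)" by (simp add: algebra_simps power2_eq_square)
  moreover have "S + t * Q = (-(S^2)) / (Q - S)" unfolding t_def using Sneg Q0
    by (simp add: field_simps power2_eq_square)
  moreover have "(-(S^2)) / (Q - S) < 0" using Sneg Q0 by (simp add: divide_neg_pos)
  moreover have "0 < t" unfolding t_def using Sneg Q0 by (intro divide_pos_pos) auto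
  ultimately show False by (metis mult_pos_neg not_le)
qed

lemma sum_by_bus:
  fixes f :: "'g::finite \<Rightarrow> real" and loc :: "'g \<Rightarrow> 'v::finite"
  shows "(\<Sum>n\<in>UNIV. f n) = (\<Sum>i\<in>UNIV. sum f (gens_at loc i))"
  using sum.group[of UNIV UNIV loc f] by (simp add: gens_at_def)

theorem proposition3p1:
  fixes E :: "('v::finite \<times> 'v) set"
    and zbar :: "'v \<times> 'v \<Rightarrow> real"
    and loc :: "'g::finite \<Rightarrow> 'v"
    and y :: "'v \<Rightarrow> real"
    and a c :: "'g \<Rightarrow> real"
    and xs :: "'g \<Rightarrow> real"
    and zs :: "'v \<times> 'v \<Rightarrow> real"
  assumes zbar_pos: "\<forall>e\<in>E. 0 < zbar e"
    and y_nonneg: "\<forall>i. 0 \<le> y i"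
    and a_pos: "\<forall>n. 0 < a n"
    and c_nonneg: "\<forall>n. 0 \<le> c n"
    and feas: "\<exists>x z. feasible E zbar loc y x z"
    and opt: "is_opt_DCOPF E zbar loc y a c xs zs"
    and uniq: "\<forall>x z. is_opt_DCOPF E zbar loc y a c x z \<longrightarrow> x = xs"
    and gens: "\<forall>i. card (gens_at loc i) = 0 \<or> card (gens_at loc i) \<ge> 2"
  shows "\<exists>b. is_efficient_bid E zbar loc y a c xs zs b \<and> is_Nash E zbar loc y a c b"
proof -
  define \<beta> where "\<beta> n = 2 * a n * xs n + c n" for n
  define lam where "lam i = Min (\<beta> ` gens_at loc i)" for i
  define b where "b n = lam (loc n)" for n
  have fin: "finite (gens_at loc i)" for i by simp
  have nin: "n \<in> gens_at loc (loc n)" for n by (simp add: gens_at_def)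
  have f1: "feasible E zbar loc y xs zs" using opt unfolding is_opt_DCOPF_def by auto
  have xs0: "0 \<le> xs n" for n using f1 unfolding feasible_def by auto
  have \<beta>0: "0 \<le> \<beta> n" for n unfolding \<beta>_def using a_pos c_nonneg xs0[of n]
    by (simp add: less_imp_le)
  have deriv: "(\<Sum>n\<in>UNIV. \<beta> n * xs n) \<le> (\<Sum>n\<in>UNIV. \<beta> n * x' n)"
    if "feasible E zbar loc y x' z'" for x' z'
    using deriv_opt[OF opt a_pos that] unfolding \<beta>_def .
  have shift_feas: "feasible E zbar loc y (\<lambda>k. x k + (if k = m then x n else 0) - (if k = n then x n else 0)) z"
    if fx: "feasible E zbar loc y x z" and mn: "m \<noteq> n" "loc m = loc n" for x z m n
  proof (rule feasible_regroup[OF fx])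
    have x0: "0 \<le> x k" for k using fx unfolding feasible_def by auto
    show "\<forall>k. 0 \<le> x k + (if k = m then x n else 0) - (if k = n then x n else 0)"
      using x0 mn by auto
    show "\<forall>i. (\<Sum>k\<in>gens_at loc i. x k + (if k = m then x n else 0) - (if k = n then x n else 0))
        = sum x (gens_at loc i)"
    proof
      fix i
      have "m \<in> gens_at loc i \<longleftrightarrow> n \<in> gens_at loc i" using mn by (simp add: gens_at_def)
      then show "(\<Sum>k\<in>gens_at loc i. x k + (if k = m then x n else 0) - (if k = n then x n else 0))
        = sum x (gens_at loc i)"
        using shift_sum[OF fin[of i], of "\<lambda>_. 1" x m "x n" n] by simp
    qed
  qed
  have exch: "\<beta> n \<le> \<beta> m" if pos: "0 < xs n" and lm: "loc m = loc n" for n m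
  proof (cases "m = n")
    case True then show ?thesis by simp
  next
    case False
    have "(\<Sum>k\<in>UNIV. \<beta> k * xs k) \<le> (\<Sum>k\<in>UNIV. \<beta> k * (xs k + (if k = m then xs n else 0) - (if k = n then xs n else 0)))"
      by (rule deriv[OF shift_feas[OF f1 False lm]])
    also have "\<dots> = (\<Sum>k\<in>UNIV. \<beta> k * xs k) + \<beta> m * xs n - \<beta> n * xs n"
      using shift_sum[of UNIV \<beta> xs m "xs n" n] by simp
    finally have "\<beta> n * xs n \<le> \<beta> m * xs n" by simp
    then show ?thesis using pos by simp
  qed
  have ne: "gens_at loc (loc n) \<noteq> {}" for n using nin by auto
  have ble: "b n \<le> \<beta> n" for n unfolding b_def lam_def using nin[of n] by (intro Min_le) auto
  have beq: "b n = \<beta> n" if "0 < xs n" for n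
  proof -
    have "lam (loc n) \<in> \<beta> ` gens_at loc (loc n)" unfolding lam_def using ne[of n] by (intro Min_in) auto
    then obtain m where "loc m = loc n" "b n = \<beta> m" unfolding b_def gens_at_def by auto
    then show ?thesis using exch[OF that, of m] ble[of n] by simp
  qed
  have b0: "0 \<le> b n" for n
  proof -
    have "lam (loc n) \<in> \<beta> ` gens_at loc (loc n)" unfolding lam_def using ne[of n] by (intro Min_in) auto
    then show ?thesis unfolding b_def using \<beta>0 by auto
  qed
  have bxs: "b n * xs n = \<beta> n * xs n" for n
    using beq[of n] xs0[of n] by (cases "xs n = 0") auto
  have amax: "b n * t - gen_cost a c n t \<le> b n * xs n - gen_cost a c n (xs n)" if "0 \<le> t" for n t
  proof -
    have "b n * t \<le> \<beta> n * t" using ble[of n] that by (simp add: mult_right_mono)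
    moreover have "\<beta> n * t - gen_cost a c n t \<le> \<beta> n * xs n - gen_cost a c n (xs n)"
    proof -
      have "0 \<le> a n * (t - xs n)^2" using a_pos by (simp add: less_imp_le)
      then show ?thesis unfolding \<beta>_def gen_cost_def by (simp add: algebra_simps power2_eq_square)
    qed
    ultimately show ?thesis using bxs[of n] by linarith
  qed
  have argmax: "is_arg_max (\<lambda>t. b n * t - gen_cost a c n t) (\<lambda>t. 0 \<le> t) (xs n)" for n
    unfolding is_arg_max_def using xs0[of n] amax[of _ n] by (auto simp: not_less)
  have lpopt: "(\<Sum>n\<in>UNIV. b n * xs n) \<le> (\<Sum>n\<in>UNIV. b n * x' n)"
    if fx': "feasible E zbar loc y x' z'" for x' z'
  proof -
    define r where "r i = (SOME m. loc m = i \<and> \<beta> m = lam i)" for i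
    have r: "loc (r i) = i \<and> \<beta> (r i) = lam i" if "gens_at loc i \<noteq> {}" for i
    proof -
      have "lam i \<in> \<beta> ` gens_at loc i" unfolding lam_def using that by (intro Min_in) auto
      then have "\<exists>m. loc m = i \<and> \<beta> m = lam i" unfolding gens_at_def by auto
      then show ?thesis unfolding r_def by (rule someI_ex)
    qed
    define T where "T i = sum x' (gens_at loc i)" for i
    define x'' where "x'' k = (if k = r (loc k) then T (loc k) else 0)" for k
    have T0: "T i = 0" if "gens_at loc i = {}" for i unfolding T_def using that by simp
    have x'0: "0 \<le> x' k" for k using fx' unfolding feasible_def by auto
    have x''loc: "\<And>k. k \<in> gens_at loc i \<Longrightarrow> x'' k = (if k = r i then T i else 0)" for i
      unfolding x''_def gens_at_def by auto
    have busx: "sum x'' (gens_at loc i) = T i" for i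
    proof -
      have "sum x'' (gens_at loc i) = (\<Sum>k\<in>gens_at loc i. if k = r i then T i else 0)"
        using x''loc by (rule sum.cong[OF refl])
      also have "\<dots> = T i"
        using r[of i] T0[of i] by (cases "gens_at loc i = {}") (auto simp: gens_at_def)
      finally show ?thesis .
    qed
    have fx'': "feasible E zbar loc y x'' z'"
    proof (rule feasible_regroup[OF fx'])
      show "\<forall>k. 0 \<le> x'' k" unfolding x''_def T_def using x'0 by (simp add: sum_nonneg)
      show "\<forall>i. sum x'' (gens_at loc i) = sum x' (gens_at loc i)" using busx T_def by simp
    qed
    have bus\<beta>: "(\<Sum>k\<in>gens_at loc i. \<beta> k * x'' k) = (\<Sum>k\<in>gens_at loc i. b k * x' k)" for i
    proof -
      have "(\<Sum>k\<in>gens_at loc i. \<beta> k * x'' k) = (\<Sum>k\<in>gens_at loc i. if k = r i then \<beta> k * T i else 0)"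
        using x''loc by (intro sum.cong) auto
      also have "\<dots> = lam i * T i"
        using r[of i] T0[of i] by (cases "gens_at loc i = {}") (auto simp: gens_at_def)
      also have "\<dots> = (\<Sum>k\<in>gens_at loc i. b k * x' k)"
        unfolding T_def sum_distrib_left b_def by (intro sum.cong) (auto simp: gens_at_def)
      finally show ?thesis .
    qed
    have "(\<Sum>n\<in>UNIV. b n * xs n) = (\<Sum>n\<in>UNIV. \<beta> n * xs n)" using bxs by (intro sum.cong) auto
    also have "\<dots> \<le> (\<Sum>n\<in>UNIV. \<beta> n * x'' n)" by (rule deriv[OF fx''])
    also have "\<dots> = (\<Sum>n\<in>UNIV. b n * x' n)"
      using sum_by_bus[of "\<lambda>n. \<beta> n * x'' n" loc] sum_by_bus[of "\<lambda>n. b n * x' n" loc] bus\<beta> by simp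
    finally show ?thesis .
  qed
  have sdc: "is_opt_SDCOPF E zbar loc y b xs zs"
    unfolding is_opt_SDCOPF_def using f1 lpopt by blast
  have pay0: "0 \<le> payoff a c n (b n) (xs n)" for n
    using amax[of 0 n] unfolding payoff_def gen_cost_def by simp
  have nash: "is_Nash E zbar loc y a c b"
    unfolding is_Nash_def
  proof (intro conjI allI exI[of _ xs] exI[of _ zs] impI)
    show "0 \<le> b n" for n by (rule b0)
    show "is_opt_SDCOPF E zbar loc y b xs zs" by (rule sdc)
    fix n bn x' z'
    assume bn: "0 \<le> bn" and o': "is_opt_SDCOPF E zbar loc y (b(n := bn)) x' z'"
    have fx': "feasible E zbar loc y x' z'" using o' unfolding is_opt_SDCOPF_def by auto
    have x'0: "0 \<le> x' k" for k using fx' unfolding feasible_def by auto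
    show "payoff a c n bn (x' n) \<le> payoff a c n (b n) (xs n)"
    proof (cases "bn \<le> b n")
      case True
      have "bn * x' n \<le> b n * x' n" using True x'0[of n] by (simp add: mult_right_mono)
      then show ?thesis using amax[OF x'0[of n], of n] unfolding payoff_def by linarith
    next
      case False
      have "card (gens_at loc (loc n)) \<noteq> 0" using nin[of n] fin by (auto simp: card_eq_0_iff)
      then have c2: "card (gens_at loc (loc n)) \<ge> 2" using gens by metis
      obtain m where m: "m \<in> gens_at loc (loc n)" "m \<noteq> n"
      proof (rule ccontr)
        assume "\<not> thesis"
        then have "gens_at loc (loc n) \<subseteq> {n}" using that by blast
        then have "card (gens_at loc (loc n)) \<le> 1" using card_mono[of "{n}"] by fastforce
        then show False using c2 by simp
      qed
      have lm: "loc m = loc n" using m(1) by (simp add: gens_at_def)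
      have "x' n = 0"
      proof (rule ccontr)
        assume "x' n \<noteq> 0"
        then have pos: "0 < x' n" using x'0[of n] by simp
        let ?b = "b(n := bn)"
        have "(\<Sum>k\<in>UNIV. ?b k * x' k) \<le> (\<Sum>k\<in>UNIV. ?b k * (x' k + (if k = m then x' n else 0) - (if k = n then x' n else 0)))"
          using o' shift_feas[OF fx' m(2) lm] unfolding is_opt_SDCOPF_def by blast
        also have "\<dots> = (\<Sum>k\<in>UNIV. ?b k * x' k) + ?b m * x' n - ?b n * x' n"
          using shift_sum[of UNIV ?b x' m "x' n" n] by simp
        finally have "bn * x' n \<le> b m * x' n" using m(2) by simp
        then have "bn \<le> b m" using pos by simp
        moreover have "b m = b n" unfolding b_def using lm by simp
        ultimately show False using False by simp
      qed
      then show ?thesis using pay0[of n] unfolding payoff_def gen_cost_def by simp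
    qed
  qed
  have "is_efficient_bid E zbar loc y a c xs zs b"
    unfolding is_efficient_bid_def using b0 sdc argmax by blast
  then show ?thesis using nash by blast
qed

end
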